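(* Let $M$ and $N$ be positive integers with $N \le M$, and let $S=\{\vec b\in\mathbb{F}_2^M : H(\vec b)=N\}$, where $H(\vec b)$ denotes the Hamming weight. Then there exist a nonnegative integer $Q$ with $Q\le 2N\log_2 M$ and a binary $Q\times M$ matrix $\mathbf{G}$ over $\mathbb{F}_2$ such that the linear map $\vec b\mapsto \mathbf{G}\vec b$ (arithmetic mod 2) is injective on $S$.
   Context: A fermionic system with $M$ modes and $N$ particles has its particle-number-conserving Fock basis states labelled by the bitstrings in $S$ (occupation vectors of weight $N$). A "linear (number-conserving) encoding" into $Q$ qubits is a binary matrix $\mathbf{G}\in\mathbb{F}_2^{Q\times M}$ mapping $|\vec b\rangle\mapsto|\mathbf{G}\vec b\rangle$ that is injective on $S$; $Q$ is its qubit cost. Logarithms are base 2. *)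

theory Defs
  imports Complex_Main "HOL-Library.Z2"
begin

text \<open>Vectors in F_2^M are represented as functions nat => bit, with components
  indexed by 0..M-1 (values outside this range are required to be 0).
  A Q x M matrix over F_2 is a function nat => nat => bit (row, column).\<close>

definition f2_vecs :: "nat \<Rightarrow> (nat \<Rightarrow> bit) set" where
  "f2_vecs M = {b. \<forall>j. j \<ge> M \<longrightarrow> b j = 0}"

definition hamming_weight :: "nat \<Rightarrow> (nat \<Rightarrow> bit) \<Rightarrow> nat" where
  "hamming_weight M b = card {j. j < M \<and> b j \<noteq> 0}"

definition weight_set :: "nat \<Rightarrow> nat \<Rightarrow> (nat \<Rightarrow> bit) set" where
  "weight_set M N = {b \<in> f2_vecs M. hamming_weight M b = N}"

definition mat_vec :: "nat \<Rightarrow> nat \<Rightarrow> (nat \<Rightarrow> nat \<Rightarrow> bit) \<Rightarrow> (nat \<Rightarrow> bit) \<Rightarrow> (nat \<Rightarrow> bit)" where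
  "mat_vec Q M G b = (\<lambda>i. if i < Q then (\<Sum>j<M. G i j * b j) else 0)"

end

theory Submission
  imports Defs "HOL-Library.FuncSet"
begin

lemma bit_add_self [simp]: "(x::bit) + x = 0"
  by (cases x) simp_all

lemma bit_sum_zero: "(a::bit) + b = 0 \<Longrightarrow> a = b"
  by (cases a; cases b) simp_all

lemma card_bit_UNIV: "card (UNIV::bit set) = 2"
proof -
  have e: "(UNIV::bit set) = {0,1}" using bit_not_zero_iff by blast
  show ?thesis by (subst e) simp
qed

lemma family_bound:
  "finite {T. T \<subseteq> {..<m} \<and> card T \<le> d} \<and> card {T. T \<subseteq> {..<m} \<and> card T \<le> d} \<le> (m+1)^d"
proof -
  let ?L = "{xs. set xs \<subseteq> {..m} \<and> length xs = d}"
  have sub: "{T. T \<subseteq> {..<m} \<and> card T \<le> d} \<subseteq> (\<lambda>xs. set xs - {m}) ` ?L"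
  proof
    fix T assume T: "T \<in> {T. T \<subseteq> {..<m} \<and> card T \<le> d}"
    then have fin: "finite T" using finite_subset by blast
    define xs where "xs = sorted_list_of_set T @ replicate (d - card T) m"
    have "set xs - {m} = T" using T fin by (auto simp: xs_def)
    moreover have "xs \<in> ?L" using T fin by (auto simp: xs_def)
    ultimately show "T \<in> (\<lambda>xs. set xs - {m}) ` ?L" by blast
  qed
  have finL: "finite ?L" by (rule finite_lists_length_eq) simp
  have cL: "card ?L = (m+1)^d" by (subst card_lists_length_eq) simp_all
  show ?thesis
    using finite_subset[OF sub finite_imageI[OF finL]]
      card_mono[OF finite_imageI[OF finL] sub] card_image_le[OF finL, of "\<lambda>xs. set xs - {m}"] cL by linarith
qed

definition good :: "nat \<Rightarrow> nat \<Rightarrow> (nat \<Rightarrow> nat \<Rightarrow> bit) \<Rightarrow> nat \<Rightarrow> bool" where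
  "good Q N c m = (\<forall>T. T \<subseteq> {..<m} \<and> T \<noteq> {} \<and> card T \<le> 2*N \<longrightarrow> (\<exists>i<Q. (\<Sum>j\<in>T. c j i) \<noteq> 0))"

lemma greedy:
  assumes big: "M ^ (2*N - 1) < (2::nat)^Q" and N: "N > 0"
  shows "m \<le> M \<Longrightarrow> \<exists>c. good Q N c m"
proof (induction m)
  case 0
  then show ?case by (auto simp: good_def)
next
  case (Suc m)
  then obtain c where c: "good Q N c m" by auto
  let ?V = "PiE {..<Q} (\<lambda>_. UNIV::bit set)"
  let ?F = "{T. T \<subseteq> {..<m} \<and> card T \<le> 2*N - 1}"
  let ?s = "\<lambda>T. restrict (\<lambda>i. \<Sum>j\<in>T. c j i) {..<Q}"
  let ?B = "?s ` ?F"
  have cV: "card ?V = 2^Q" by (simp add: card_PiE card_bit_UNIV)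
  have fF: "finite ?F" and cF: "card ?F \<le> (m+1)^(2*N-1)" using family_bound by blast+
  have "(m+1)^(2*N-1) \<le> M^(2*N-1)" using Suc.prems by (simp add: power_mono)
  then have cB: "card ?B < card ?V" using card_image_le[OF fF, of ?s] cF big cV by linarith
  have "\<not> ?V \<subseteq> ?B"
  proof
    assume "?V \<subseteq> ?B"
    then have "card ?V \<le> card ?B" by (intro card_mono finite_imageI fF)
    with cB show False by simp
  qed
  then obtain v where vV: "v \<in> ?V" and vB: "v \<notin> ?B" by blast
  define c' where "c' = c(m := v)"
  have "good Q N c' (Suc m)"
    unfolding good_def
  proof (intro allI impI)
    fix T assume T: "T \<subseteq> {..<Suc m} \<and> T \<noteq> {} \<and> card T \<le> 2*N"
    show "\<exists>i<Q. (\<Sum>j\<in>T. c' j i) \<noteq> 0"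
    proof (cases "m \<in> T")
      case False
      then have "T \<subseteq> {..<m}" using T by (metis lessThan_Suc subset_insert)
      then have "\<exists>i<Q. (\<Sum>j\<in>T. c j i) \<noteq> 0" using c T by (auto simp: good_def)
      moreover have "\<And>i. (\<Sum>j\<in>T. c' j i) = (\<Sum>j\<in>T. c j i)"
        using False by (intro sum.cong) (auto simp: c'_def)
      ultimately show ?thesis by simp
    next
      case True
      let ?T' = "T - {m}"
      have finT: "finite T" using T finite_subset by blast
      have T'sub: "?T' \<subseteq> {..<m}" using T by auto
      have "card ?T' \<le> 2*N - 1" using T True finT by (simp add: card_Diff_singleton diff_le_mono)
      then have T'F: "?T' \<in> ?F" using T'sub by blast
      show ?thesis
      proof (rule ccontr)
        assume "\<not> ?thesis"
        then have z: "\<And>i. i < Q \<Longrightarrow> (\<Sum>j\<in>T. c' j i) = 0" by auto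
        have "v = ?s ?T'"
        proof
          fix i
          show "v i = ?s ?T' i"
          proof (cases "i < Q")
            case True
            have "(\<Sum>j\<in>T. c' j i) = c' m i + (\<Sum>j\<in>?T'. c' j i)"
              using \<open>m \<in> T\<close> finT by (simp add: sum.remove)
            also have "(\<Sum>j\<in>?T'. c' j i) = (\<Sum>j\<in>?T'. c j i)"
              by (intro sum.cong) (auto simp: c'_def)
            finally have "v i + (\<Sum>j\<in>?T'. c j i) = 0" using z[OF True] by (simp add: c'_def)
            then have "v i = (\<Sum>j\<in>?T'. c j i)"
              by (rule bit_sum_zero)
            then show ?thesis using True by simp
          next
            case False
            then show ?thesis using vV by (auto simp: PiE_def extensional_def)
          qed
        qed
        then show False using vB T'F by blast
      qed
    qed
  qed
  then show ?case by blast
qed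

lemma bit_cancel3: "(a::bit) + c + (b + c) = a + b"
  by (cases a; cases b; cases c) simp_all

lemma mat_vec_supp:
  assumes "b \<in> f2_vecs M"
  shows "mat_vec Q M G b i = (if i < Q then (\<Sum>j\<in>{j. j < M \<and> b j \<noteq> 0}. G i j) else 0)"
proof -
  have "(\<Sum>j<M. G i j * b j) = (\<Sum>j<M. if b j \<noteq> 0 then G i j else 0)"
    by (intro sum.cong) auto
  also have "\<dots> = (\<Sum>j\<in>{j\<in>{..<M}. b j \<noteq> 0}. G i j)"
    by (rule sum.inter_filter[symmetric]) simp
  finally show ?thesis by (simp add: mat_vec_def)
qed

lemma vec_supp:
  assumes "b \<in> f2_vecs M"
  shows "b = (\<lambda>j. if j \<in> {j. j < M \<and> b j \<noteq> 0} then 1 else 0)"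
proof
  fix j show "b j = (if j \<in> {j. j < M \<and> b j \<noteq> 0} then 1 else 0)"
    using assms by (cases "j < M") (auto simp: f2_vecs_def)
qed

theorem theorem1:
  fixes M N :: nat
  assumes "0 < M" and "0 < N" and "N \<le> M"
  shows "\<exists>Q::nat. \<exists>G :: nat \<Rightarrow> nat \<Rightarrow> bit.
           real Q \<le> 2 * real N * log 2 (real M) \<and>
           inj_on (mat_vec Q M G) (weight_set M N)"
proof (cases "M = 1")
  case True
  then have N1: "N = 1" using assms by simp
  have "inj_on (mat_vec 0 M (\<lambda>_ _. 0)) (weight_set M N)"
  proof (rule inj_onI)
    fix b b' assume b: "b \<in> weight_set M N" and b': "b' \<in> weight_set M N"
    have key: "x = (\<lambda>j. if j = 0 then 1 else 0)" if x: "x \<in> weight_set M N" for x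
    proof
      fix j
      have "x 0 \<noteq> 0"
      proof
        assume "x 0 = 0"
        moreover have "\<And>j. j < M \<Longrightarrow> j = 0" using True by simp
        ultimately have "{j. j < M \<and> x j \<noteq> 0} = {}" by blast
        then have "hamming_weight M x = 0" unfolding hamming_weight_def by (metis card.empty)
        moreover have "hamming_weight M x = N" using x by (simp add: weight_set_def)
        ultimately show False using N1 by simp
      qed
      then show "x j = (if j = 0 then 1 else 0)"
        using x True by (auto simp: weight_set_def f2_vecs_def)
    qed
    show "b = b'" using key[OF b] key[OF b'] by simp
  qed
  then show ?thesis using True by (intro exI[of _ 0]) auto
next
  case False
  then have M2: "M \<ge> 2" using assms by simp
  have "M^(2*N) \<ge> 1" using assms by simp
  then obtain Q where Q1: "2^Q \<le> M^(2*N)" and Q2: "M^(2*N) < 2^(Q+1)"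
    using ex_power_ivl1[of 2 "M^(2*N)"] by auto
  have "M^(2*N) = M * M^(2*N-1)" using assms
    by (metis Suc_diff_1 mult_pos_pos pos2 power_Suc)
  then have "2 * M^(2*N-1) \<le> M^(2*N)" using M2 by simp
  then have big: "M^(2*N-1) < 2^Q" using Q2 by simp
  obtain c where c: "good Q N c M" using greedy[OF big assms(2)] by blast
  define G where "G = (\<lambda>i j. c j i)"
  have r: "(2::real)^Q \<le> real M ^ (2*N)" using Q1
    by (metis of_nat_le_iff of_nat_numeral of_nat_power)
  have "real Q = log 2 (2^Q)" by simp
  also have "\<dots> \<le> log 2 (real (M^(2*N)))"
    using r assms(1) by (subst log_le_cancel_iff) auto
  also have "\<dots> = 2 * real N * log 2 (real M)"
    by (simp add: log_nat_power)
  finally have bound: "real Q \<le> 2 * real N * log 2 (real M)" .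
  have "inj_on (mat_vec Q M G) (weight_set M N)"
  proof (rule inj_onI)
    fix b b' assume b: "b \<in> weight_set M N" and b': "b' \<in> weight_set M N"
      and eq: "mat_vec Q M G b = mat_vec Q M G b'"
    define A where "A = {j. j < M \<and> b j \<noteq> 0}"
    define B where "B = {j. j < M \<and> b' j \<noteq> 0}"
    have bf: "b \<in> f2_vecs M" and bf': "b' \<in> f2_vecs M" using b b' by (auto simp: weight_set_def)
    have cA: "card A = N" and cB: "card B = N" using b b'
      by (auto simp: weight_set_def hamming_weight_def A_def B_def)
    have fA: "finite A" and fB: "finite B" by (auto simp: A_def B_def)
    define T where "T = (A - B) \<union> (B - A)"
    have Tsub: "T \<subseteq> {..<M}" by (auto simp: T_def A_def B_def)
    have "card T \<le> card (A - B) + card (B - A)" unfolding T_def by (rule card_Un_le)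
    also have "\<dots> \<le> card A + card B" using fA fB by (intro add_mono card_mono) auto
    finally have cT: "card T \<le> 2 * N" using cA cB by simp
    have z: "(\<Sum>j\<in>T. c j i) = 0" if i: "i < Q" for i
    proof -
      have "mat_vec Q M G b i = mat_vec Q M G b' i" using eq by simp
      then have e: "(\<Sum>j\<in>A. c j i) = (\<Sum>j\<in>B. c j i)"
        using i mat_vec_supp[OF bf, of Q G i] mat_vec_supp[OF bf', of Q G i]
        by (simp add: A_def B_def G_def)
      have t: "(\<Sum>j\<in>T. c j i) = (\<Sum>j\<in>A - B. c j i) + (\<Sum>j\<in>B - A. c j i)"
        unfolding T_def using fA fB by (intro sum.union_disjoint) auto
      have a: "(\<Sum>j\<in>A. c j i) = (\<Sum>j\<in>A - B. c j i) + (\<Sum>j\<in>A \<inter> B. c j i)"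
        using sum.Int_Diff[OF fA, of "\<lambda>j. c j i" B] by (metis add.commute)
      have bb: "(\<Sum>j\<in>B. c j i) = (\<Sum>j\<in>B - A. c j i) + (\<Sum>j\<in>A \<inter> B. c j i)"
        using sum.Int_Diff[OF fB, of "\<lambda>j. c j i" A] by (metis add.commute Int_commute)
      have "(\<Sum>j\<in>T. c j i) = (\<Sum>j\<in>A. c j i) + (\<Sum>j\<in>B. c j i)"
        unfolding t a bb by (rule bit_cancel3[symmetric])
      also have "\<dots> = 0" using e by simp
      finally show ?thesis .
    qed
    have "T = {}"
    proof (rule ccontr)
      assume "T \<noteq> {}"
      then obtain i where "i < Q" "(\<Sum>j\<in>T. c j i) \<noteq> 0"
        using c Tsub cT by (auto simp: good_def)
      then show False using z by simp
    qed
    then have "A = B" by (auto simp: T_def)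
    then show "b = b'" using vec_supp[OF bf] vec_supp[OF bf'] A_def B_def by metis
  qed
  then show ?thesis using bound by blast
qed

end
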